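(* Let $(P_n)_{n\ge 0}$ be the Padovan sequence and for $1\le b\le 3$ and $m\ge 0$ let $r_m^{(3,b)}=\sum_{k=0}^{m}P_{3k+b}$. Then for every $b\in\{1,2,3\}$ and every $m\ge 3$, $$r_m^{(3,b)}=3r_{m-1}^{(3,b)}-2r_{m-2}^{(3,b)}+r_{m-3}^{(3,b)}+1.$$
   Context: The Padovan sequence is defined by $P_0=P_1=P_2=1$ and $P_{n+3}=P_{n+1}+P_n$. *)

theory Defs
  imports Main
begin

fun padovan :: "nat \<Rightarrow> int" where
  "padovan 0 = 1"
| "padovan (Suc 0) = 1"
| "padovan (Suc (Suc 0)) = 1"
| "padovan (Suc (Suc (Suc n))) = padovan (Suc n) + padovan n"

definition r3 :: "nat \<Rightarrow> nat \<Rightarrow> int" where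
  "r3 b m = (\<Sum>k=0..m. padovan (3*k + b))"

end

theory Submission
  imports Defs
begin

lemma p3: "padovan (n+3) = padovan (n+1) + padovan n"
  by (simp add: eval_nat_numeral)

lemma p3g: "a = n+3 \<Longrightarrow> c = n+1 \<Longrightarrow> padovan a = padovan c + padovan n"
  using p3 by simp

lemma p9: "padovan (n+9) = 3*padovan (n+6) - 2*padovan (n+3) + padovan n"
proof -
  have a: "padovan (n+3) = padovan (n+1) + padovan n" by (rule p3)
  have b: "padovan (n+4) = padovan (n+2) + padovan (n+1)" by (rule p3g) simp_all
  have c: "padovan (n+5) = padovan (n+3) + padovan (n+2)" by (rule p3g) simp_all
  have d: "padovan (n+6) = padovan (n+4) + padovan (n+3)" by (rule p3g) simp_all
  have e: "padovan (n+7) = padovan (n+5) + padovan (n+4)" by (rule p3g) simp_all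
  have f: "padovan (n+8) = padovan (n+6) + padovan (n+5)" by (rule p3g) simp_all
  have g: "padovan (n+9) = padovan (n+7) + padovan (n+6)" by (rule p3g) simp_all
  show ?thesis using a b c d e f g by linarith
qed

lemma rsuc: "r3 b (Suc m) = r3 b m + padovan (3*Suc m + b)"
  unfolding r3_def by (simp add: algebra_simps del: padovan.simps)

lemma S: "b \<in> {1,2,3} \<Longrightarrow>
  padovan (3*(n+3)+b) - 2*padovan (3*(n+2)+b) - r3 b n = 1"
proof (induction n)
  case 0
  then show ?case by (auto simp: r3_def eval_nat_numeral)
next
  case (Suc n)
  have "padovan (3*(Suc n+3)+b) = 3*padovan (3*(n+3)+b) - 2*padovan (3*(n+2)+b) + padovan (3*(n+1)+b)"
    using p9[of "3*(n+1)+b"] by (simp add: algebra_simps del: padovan.simps)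
  moreover have "padovan (3*(Suc n+2)+b) = padovan (3*(n+3)+b)" by (simp add: algebra_simps del: padovan.simps)
  moreover have "r3 b (Suc n) = r3 b n + padovan (3*(n+1)+b)" using rsuc by (simp add: algebra_simps del: padovan.simps)
  ultimately show ?case using Suc by linarith
qed

theorem theorem4p3:
  fixes b m :: nat
  assumes "b \<in> {1,2,3}" and "m \<ge> 3"
  shows "r3 b m = 3 * r3 b (m-1) - 2 * r3 b (m-2) + r3 b (m-3) + 1"
proof -
  obtain n where m: "m = n+3" using assms(2) by (metis add.commute le_iff_add)
  have 1: "r3 b (n+1) = r3 b n + padovan (3*(n+1)+b)" using rsuc by (simp add: algebra_simps del: padovan.simps)
  have 2: "r3 b (n+2) = r3 b (n+1) + padovan (3*(n+2)+b)" using rsuc[of b "n+1"] by (simp add: algebra_simps del: padovan.simps)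
  have 3: "r3 b (n+3) = r3 b (n+2) + padovan (3*(n+3)+b)" using rsuc[of b "n+2"] by (simp add: eval_nat_numeral algebra_simps del: padovan.simps)
  have "m-1 = n+2" "m-2 = n+1" "m-3 = n" using m by auto
  then show ?thesis using m 1 2 3 S[OF assms(1), of n] by (simp add: algebra_simps del: padovan.simps)
qed

end
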